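(* Under the hypotheses of Proposition 5 (namely $\alpha_1,\dots,\alpha_K\in\mathbb R^d\setminus\{0\}$, $\eta_1,\dots,\eta_J\in\mathbb R^d$ and $\|\pi(\eta_1)\|>\max_{j\ge2}\|\pi(\eta_j)\|$), one has $(\eta_1-\eta_j)^{T}\pi(\eta_1)>0$ for every $j=2,\dots,J$.
   Context: Canonical projection: for $\eta\ne0$, choose a (possibly empty) subset $\{\alpha_{k_1},\dots,\alpha_{k_m}\}$ of $\{\alpha_1,\dots,\alpha_K\}$, $\mathcal H_\eta$ its span, such that $P_{\mathcal H_\eta}\eta=\sum_p\gamma_{k_p}\alpha_{k_p}$ with all $\gamma_{k_p}\ge0$ and $\alpha_k^{T}P_{\mathcal H_\eta^\perp}\eta<0$ for all $k\notin\{k_1,\dots,k_m\}$; such a subset exists and $\pi(\eta):=P_{\mathcal H_\eta^\perp}\eta$ is uniquely determined and continuous in $\eta$ (set $\pi(0)=0$). $P$ denotes orthogonal projection. *)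

theory Defs
  imports "HOL-Analysis.Analysis"
begin

definition orth_proj :: "'a::euclidean_space set \<Rightarrow> 'a \<Rightarrow> 'a" where
  "orth_proj V x = closest_point V x"

definition orth_proj_perp :: "'a::euclidean_space set \<Rightarrow> 'a \<Rightarrow> 'a" where
  "orth_proj_perp V x = x - orth_proj V x"

definition canon_subset :: "(nat \<Rightarrow> 'a::euclidean_space) \<Rightarrow> nat \<Rightarrow> 'a \<Rightarrow> nat set \<Rightarrow> bool" where
  "canon_subset alpha K eta S \<longleftrightarrow>
     S \<subseteq> {1..K} \<and>
     (\<exists>\<gamma>::nat \<Rightarrow> real. (\<forall>k\<in>S. \<gamma> k \<ge> 0) \<and>
        orth_proj (span (alpha ` S)) eta = (\<Sum>k\<in>S. \<gamma> k *\<^sub>R alpha k)) \<and>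
     (\<forall>k\<in>{1..K} - S. alpha k \<bullet> orth_proj_perp (span (alpha ` S)) eta < 0)"

definition canon_proj :: "(nat \<Rightarrow> 'a::euclidean_space) \<Rightarrow> nat \<Rightarrow> 'a \<Rightarrow> 'a" where
  "canon_proj alpha K eta =
     (if eta = 0 then 0
      else orth_proj_perp (span (alpha ` (SOME S. canon_subset alpha K eta S))) eta)"

end

theory Submission
  imports Defs
begin

lemma span_proj_in:
  fixes x :: "'a::euclidean_space"
  shows "orth_proj (span B) x \<in> span B"
  unfolding orth_proj_def
  by (rule closest_point_in_set) (auto intro: span_zero)

lemma span_proj_orth:
  fixes x :: "'a::euclidean_space"
  assumes "v \<in> span B"
  shows "orth_proj_perp (span B) x \<bullet> v = 0"
proof -
  let ?p = "closest_point (span B) x"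
  have p: "?p \<in> span B" using span_proj_in[of B x] by (simp add: orth_proj_def)
  have "?p + v \<in> span B" "?p - v \<in> span B" using p assms by (auto intro: span_add span_diff)
  then have "(x - ?p) \<bullet> ((?p + v) - ?p) \<le> 0" "(x - ?p) \<bullet> ((?p - v) - ?p) \<le> 0"
    using closest_point_dot[OF subspace_imp_convex[OF subspace_span] closed_span] by blast+
  then show ?thesis by (simp add: orth_proj_perp_def orth_proj_def inner_diff_right)
qed

lemma span_proj_unique:
  fixes x :: "'a::euclidean_space"
  assumes p: "p \<in> span B" and orth: "\<And>v. v \<in> span B \<Longrightarrow> (x - p) \<bullet> v = 0"
  shows "orth_proj (span B) x = p"
proof -
  have "\<forall>z\<in>span B. dist x p \<le> dist x z"
  proof
    fix z assume z: "z \<in> span B"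
    have "p - z \<in> span B" using p z by (rule span_diff)
    then have o: "(x - p) \<bullet> (p - z) = 0" by (rule orth)
    have "x - z = (x - p) + (p - z)" by simp
    then have "(norm (x - z))\<^sup>2 = (norm (x - p))\<^sup>2 + (norm (p - z))\<^sup>2"
      by (metis o norm_add_Pythagorean orthogonal_def)
    then have "(norm (x - p))\<^sup>2 \<le> (norm (x - z))\<^sup>2" by simp
    then show "dist x p \<le> dist x z" by (simp add: dist_norm power2_le_iff_abs_le)
  qed
  then show ?thesis unfolding orth_proj_def
    by (metis closest_point_unique subspace_imp_convex subspace_span closed_span p)
qed

definition gcone :: "(nat \<Rightarrow> 'a::euclidean_space) \<Rightarrow> nat \<Rightarrow> 'a set" where
  "gcone alpha K = {\<Sum>k\<in>{1..K}. g k *\<^sub>R alpha k | g. \<forall>k. g k \<ge> 0}"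

lemma gcone_convex: "convex (gcone alpha K)"
  unfolding convex_def gcone_def
proof (clarify)
  fix g h :: "nat \<Rightarrow> real" and u v :: real
  assume g: "\<forall>k. 0 \<le> g k" and h: "\<forall>k. 0 \<le> h k" and uv: "0 \<le> u" "0 \<le> v" "u + v = 1"
  show "\<exists>f. u *\<^sub>R (\<Sum>k\<in>{1..K}. g k *\<^sub>R alpha k) + v *\<^sub>R (\<Sum>k\<in>{1..K}. h k *\<^sub>R alpha k)
       = (\<Sum>k\<in>{1..K}. f k *\<^sub>R alpha k) \<and> (\<forall>k. 0 \<le> f k)"
    by (rule exI[of _ "\<lambda>k. u * g k + v * h k"])
       (simp add: g h uv scaleR_sum_right sum.distrib[symmetric] scaleR_add_left)
qed

lemma gcone_conic: "conic (gcone alpha K)"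
  unfolding conic_def gcone_def
proof (clarify)
  fix g :: "nat \<Rightarrow> real" and c :: real
  assume g: "\<forall>k. 0 \<le> g k" and c: "0 \<le> c"
  show "\<exists>f. c *\<^sub>R (\<Sum>k\<in>{1..K}. g k *\<^sub>R alpha k) = (\<Sum>k\<in>{1..K}. f k *\<^sub>R alpha k) \<and> (\<forall>k. 0 \<le> f k)"
    by (rule exI[of _ "\<lambda>k. c * g k"]) (simp add: g c scaleR_sum_right)
qed

lemma gcone_gen: "k \<in> {1..K} \<Longrightarrow> alpha k \<in> gcone alpha K"
  unfolding gcone_def
proof (rule CollectI, rule exI[of _ "\<lambda>i. if i = k then 1 else 0"], intro conjI)
  assume k: "k \<in> {1..K}"
  have "(\<Sum>i\<in>{1..K}. (if i = k then 1 else 0) *\<^sub>R alpha i) = (\<Sum>i\<in>{1..K}. if i = k then alpha i else 0)"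
    by (rule sum.cong) auto
  also have "\<dots> = alpha k" using k by (simp add: sum.delta)
  finally show "alpha k = (\<Sum>i\<in>{1..K}. (if i = k then 1 else 0) *\<^sub>R alpha i)" by simp
qed simp

definition hcone where "hcone alpha K = conic hull (convex hull (alpha ` {1..K}))"

lemma hcone_sub: "hcone alpha K \<subseteq> gcone alpha K"
proof -
  have "convex hull (alpha ` {1..K}) \<subseteq> gcone alpha K"
    by (rule hull_minimal) (auto intro: gcone_gen gcone_convex)
  then show ?thesis unfolding hcone_def
    by (rule hull_minimal) (simp_all add: gcone_conic)
qed

lemma canon_exists:
  fixes alpha :: "nat \<Rightarrow> 'a::euclidean_space"
  shows "\<exists>S. canon_subset alpha K eta S"
proof (cases "K = 0")
  case True
  have "orth_proj (span (alpha ` {})) eta = 0"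
    by (rule span_proj_unique) auto
  then show ?thesis using True unfolding canon_subset_def by (intro exI[of _ "{}"]) auto
next
  case False
  let ?C = "hcone alpha K"
  have ne: "?C \<noteq> {}" using False unfolding hcone_def by (auto simp: conic_hull_eq_empty)
  have cl: "closed ?C" unfolding hcone_def
    by (rule closed_conic_hull_strong) (simp add: polytope_convex_hull)
  have cv: "convex ?C" unfolding hcone_def by (simp add: convex_conic_hull)
  have cn: "conic ?C" unfolding hcone_def by (simp add: conic_conic_hull)
  have gen: "alpha k \<in> ?C" if "k \<in> {1..K}" for k
    unfolding hcone_def using that
    by (meson hull_inc hull_subset image_eqI subsetD)
  have add: "a + b \<in> ?C" if "a \<in> ?C" "b \<in> ?C" for a b
  proof -
    have "(1/2) *\<^sub>R a + (1/2) *\<^sub>R b \<in> ?C" using cv that by (simp add: convexD)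
    from conicD[OF cn this, of 2] show ?thesis by (simp add: scaleR_add_right)
  qed
  define p where "p = closest_point ?C eta"
  define r where "r = eta - p"
  have pC: "p \<in> ?C" unfolding p_def by (rule closest_point_in_set[OF cl ne])
  have dot: "r \<bullet> (x - p) \<le> 0" if "x \<in> ?C" for x
    unfolding r_def p_def by (rule closest_point_dot[OF cv cl that])
  have "0 \<in> ?C" using conicD[OF cn pC, of 0] by simp
  from dot[OF this] have r1: "r \<bullet> p \<ge> 0" by simp
  from dot[OF conicD[OF cn pC, of 2]] have "r \<bullet> p \<le> 0"
    by (simp add: algebra_simps inner_diff_right)
  with r1 have rp: "r \<bullet> p = 0" by simp
  have ra: "alpha k \<bullet> r \<le> 0" if "k \<in> {1..K}" for k
    using dot[OF add[OF pC gen[OF that]]] by (simp add: inner_commute)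
  obtain g where g: "\<forall>k. g k \<ge> 0" and pg: "p = (\<Sum>k\<in>{1..K}. g k *\<^sub>R alpha k)"
    using hcone_sub pC unfolding gcone_def by blast
  define S where "S = {k\<in>{1..K}. alpha k \<bullet> r = 0}"
  have supp: "g k = 0" if "k \<in> {1..K}" "k \<notin> S" for k
  proof (rule ccontr)
    assume gk: "g k \<noteq> 0"
    have "r \<bullet> p = (\<Sum>i\<in>{1..K}. g i * (alpha i \<bullet> r))"
      by (simp add: pg inner_sum_right inner_commute)
    also have "\<dots> < 0"
    proof -
      have "0 < (\<Sum>i\<in>{1..K}. - (g i * (alpha i \<bullet> r)))"
      proof (rule sum_pos2[OF _ that(1)])
        show "finite {1..K}" by simp
        show "0 \<le> - (g i * (alpha i \<bullet> r))" if "i \<in> {1..K}" for i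
          using g ra[OF that] by (simp add: mult_nonneg_nonpos)
        have "alpha k \<bullet> r < 0" using ra[OF that(1)] that unfolding S_def by auto
        moreover have "g k > 0" using g gk by (metis order_le_neq_trans)
        ultimately show "0 < - (g k * (alpha k \<bullet> r))" by (simp add: mult_pos_neg)
      qed
      then show ?thesis by (simp add: sum_negf)
    qed
    finally show False using rp by simp
  qed
  have SK: "S \<subseteq> {1..K}" unfolding S_def by auto
  have pS: "p = (\<Sum>k\<in>S. g k *\<^sub>R alpha k)"
  proof -
    have "p = (\<Sum>k\<in>S. g k *\<^sub>R alpha k) + (\<Sum>k\<in>{1..K}-S. g k *\<^sub>R alpha k)"
      unfolding pg using SK by (metis finite_atLeastAtMost sum.subset_diff add.commute)
    moreover have "(\<Sum>k\<in>{1..K}-S. g k *\<^sub>R alpha k) = 0"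
      using supp by (intro sum.neutral) auto
    ultimately show ?thesis by simp
  qed
  have pspan: "p \<in> span (alpha ` S)"
    unfolding pS by (intro span_sum span_scale span_base) auto
  have rorth: "r \<bullet> v = 0" if "v \<in> span (alpha ` S)" for v
    using that
  proof (induction rule: span_induct_alt)
    case base then show ?case by simp
  next
    case (step c x y)
    then obtain k where "k \<in> S" "x = alpha k" by auto
    then have "r \<bullet> x = 0" unfolding S_def by (simp add: inner_commute)
    with step show ?case by (simp add: inner_add_right)
  qed
  have proj: "orth_proj (span (alpha ` S)) eta = p"
    by (rule span_proj_unique[OF pspan]) (use rorth r_def in auto)
  show ?thesis
  proof (intro exI[of _ S], unfold canon_subset_def, intro conjI)
    show "S \<subseteq> {1..K}" by (rule SK)
    show "\<exists>\<gamma>. (\<forall>k\<in>S. 0 \<le> \<gamma> k) \<and> orth_proj (span (alpha ` S)) eta = (\<Sum>k\<in>S. \<gamma> k *\<^sub>R alpha k)"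
      using g proj pS by auto
    show "\<forall>k\<in>{1..K} - S. alpha k \<bullet> orth_proj_perp (span (alpha ` S)) eta < 0"
      using ra proj unfolding orth_proj_perp_def r_def S_def
      by (auto simp: order_less_le)
  qed
qed

theorem corollary2:
  fixes alpha :: "nat \<Rightarrow> 'a::euclidean_space" and eta :: "nat \<Rightarrow> 'a"
    and K J :: nat
  assumes alpha_nz: "\<forall>k\<in>{1..K}. alpha k \<noteq> 0"
    and dom: "\<forall>j\<in>{2..J}. norm (canon_proj alpha K (eta j)) < norm (canon_proj alpha K (eta 1))"
  shows "\<forall>j\<in>{2..J}. (eta 1 - eta j) \<bullet> canon_proj alpha K (eta 1) > 0"
proof
  fix j assume j: "j \<in> {2..J}"
  define p1 where "p1 = canon_proj alpha K (eta 1)"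
  define pj where "pj = canon_proj alpha K (eta j)"
  have lt: "norm pj < norm p1" using dom j unfolding p1_def pj_def by auto
  have e1: "eta 1 \<noteq> 0"
  proof
    assume "eta 1 = 0" then have "p1 = 0" unfolding p1_def canon_proj_def by simp
    with lt show False by simp
  qed
  define S1 where "S1 = (SOME S. canon_subset alpha K (eta 1) S)"
  have cs1: "canon_subset alpha K (eta 1) S1"
    unfolding S1_def using canon_exists by (rule someI_ex)
  have p1eq: "p1 = orth_proj_perp (span (alpha ` S1)) (eta 1)"
    unfolding p1_def canon_proj_def S1_def using e1 by simp
  have a: "eta 1 \<bullet> p1 = p1 \<bullet> p1"
  proof -
    have "eta 1 = orth_proj (span (alpha ` S1)) (eta 1) + p1"
      unfolding p1eq orth_proj_perp_def by simp
    moreover have "orth_proj (span (alpha ` S1)) (eta 1) \<bullet> p1 = 0"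
      unfolding p1eq using span_proj_orth[OF span_proj_in] by (simp add: inner_commute)
    ultimately show ?thesis by (metis inner_add_left add_0)
  qed
  have b: "alpha k \<bullet> p1 \<le> 0" if "k \<in> {1..K}" for k
  proof (cases "k \<in> S1")
    case True
    then have "alpha k \<in> span (alpha ` S1)" by (intro span_base) auto
    then show ?thesis unfolding p1eq by (metis span_proj_orth inner_commute order_refl)
  next
    case False
    then have "alpha k \<bullet> p1 < 0" using cs1 that unfolding canon_subset_def p1eq by auto
    then show ?thesis by simp
  qed
  have c: "eta j \<bullet> p1 \<le> pj \<bullet> p1"
  proof (cases "eta j = 0")
    case True
    then show ?thesis unfolding pj_def canon_proj_def by simp
  next
    case False
    define Sj where "Sj = (SOME S. canon_subset alpha K (eta j) S)"
    have csj: "canon_subset alpha K (eta j) Sj"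
      unfolding Sj_def using canon_exists by (rule someI_ex)
    have pjeq: "pj = orth_proj_perp (span (alpha ` Sj)) (eta j)"
      unfolding pj_def canon_proj_def Sj_def using False by simp
    obtain g where g: "\<forall>k\<in>Sj. g k \<ge> 0"
      and pg: "orth_proj (span (alpha ` Sj)) (eta j) = (\<Sum>k\<in>Sj. g k *\<^sub>R alpha k)"
      and SjK: "Sj \<subseteq> {1..K}"
      using csj unfolding canon_subset_def by blast
    have "eta j = (\<Sum>k\<in>Sj. g k *\<^sub>R alpha k) + pj"
      unfolding pjeq orth_proj_perp_def pg[symmetric] by simp
    then have "eta j \<bullet> p1 = (\<Sum>k\<in>Sj. g k * (alpha k \<bullet> p1)) + pj \<bullet> p1"
      by (simp add: inner_add_left inner_sum_left)
    moreover have "(\<Sum>k\<in>Sj. g k * (alpha k \<bullet> p1)) \<le> 0"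
      using g b SjK by (intro sum_nonpos) (meson atLeastAtMost_iff mult_nonneg_nonpos subsetD)
    ultimately show ?thesis by simp
  qed
  have "pj \<bullet> p1 \<le> norm pj * norm p1" by (rule norm_cauchy_schwarz)
  also have "\<dots> < norm p1 * norm p1"
    using lt by (intro mult_strict_right_mono) (auto intro: le_less_trans[OF norm_ge_zero])
  also have "\<dots> = p1 \<bullet> p1" by (simp add: dot_square_norm power2_eq_square)
  finally have "pj \<bullet> p1 < p1 \<bullet> p1" .
  then show "(eta 1 - eta j) \<bullet> canon_proj alpha K (eta 1) > 0"
    using a c unfolding p1_def[symmetric] by (simp add: inner_diff_left)
qed

end
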